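(* Let $R$ be a commutative domain, $I,J\subseteq R$ two non-zero ideals such that $IJ$ can be generated by $3$ elements, and $\mathfrak m\subseteq R$ a maximal ideal. Then at least one of the following occurs: (1) there exists a non-zero $x\in I_{\mathfrak m}$ such that $(IJ)_{\mathfrak m}/xJ_{\mathfrak m}$ is a cyclic $R_{\mathfrak m}$-module generated by the class of an element of the form $ij$ with $i\in I_{\mathfrak m}$, $j\in J_{\mathfrak m}$; (2) there exists a non-zero $y\in J_{\mathfrak m}$ such that $(IJ)_{\mathfrak m}/yI_{\mathfrak m}$ is a cyclic $R_{\mathfrak m}$-module generated by the class of an element of the form $ij$ with $i\in I_{\mathfrak m}$, $j\in J_{\mathfrak m}$. In particular, if (1) holds (with generator the class of $ij$) then the $R_{\mathfrak m}$-module morphism $I_{\mathfrak m}/xR_{\mathfrak m}\to (IJ)_{\mathfrak m}/xJ_{\mathfrak m}$ induced by multiplication by $j$ is surjective; and if (2) holds (with generator the class of $ij$) then the $R_{\mathfrak m}$-module morphism $J_{\mathfrak m}/yR_{\mathfrak m}\to (IJ)_{\mathfrak m}/yI_{\mathfrak m}$ induced by multiplication by $i$ is surjective.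
   Context: $R_{\mathfrak m}$, $I_{\mathfrak m}$, $J_{\mathfrak m}$, $(IJ)_{\mathfrak m}$ denote localizations at $\mathfrak m$. *)

theory Defs
  imports "HOL-Computational_Algebra.Fraction_Field"
begin

definition is_ideal :: "'a::comm_ring_1 set \<Rightarrow> bool" where
  "is_ideal I \<longleftrightarrow> 0 \<in> I \<and> (\<forall>a\<in>I. \<forall>b\<in>I. a + b \<in> I) \<and> (\<forall>r. \<forall>a\<in>I. r * a \<in> I)"

definition maximal_ideal :: "'a::comm_ring_1 set \<Rightarrow> bool" where
  "maximal_ideal m \<longleftrightarrow> is_ideal m \<and> m \<noteq> UNIV \<and>
     (\<forall>K. is_ideal K \<and> m \<subseteq> K \<longrightarrow> K = m \<or> K = UNIV)"

definition ideal_prod :: "'a::comm_ring_1 set \<Rightarrow> 'a set \<Rightarrow> 'a set" where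
  "ideal_prod I J = {(\<Sum>k<n. f k * g k) | (n::nat) (f::nat \<Rightarrow> 'a) g. \<forall>k<n. f k \<in> I \<and> g k \<in> J}"

definition generated_by_3 :: "'a::comm_ring_1 set \<Rightarrow> bool" where
  "generated_by_3 K \<longleftrightarrow> (\<exists>a b c. K = {r * a + s * b + t * c | (r::'a) s t. True})"

text \<open>Localization at a prime/maximal ideal m of a domain, realised inside the
  fraction field: S_m = { a/s | a \<in> S, s \<notin> m }.  R_m is localize m UNIV.\<close>
definition localize :: "'a::idom set \<Rightarrow> 'a set \<Rightarrow> 'a fract set" where
  "localize m S = {Fract a s | a s. a \<in> S \<and> s \<notin> m}"

end

theory Submission
  imports Defs
begin


locale loc =
  fixes A n :: "'b::field set"
  assumes A0: "0 \<in> A" and A1: "1 \<in> A"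
    and Aadd: "\<And>x y. x \<in> A \<Longrightarrow> y \<in> A \<Longrightarrow> x + y \<in> A"
    and Amul: "\<And>x y. x \<in> A \<Longrightarrow> y \<in> A \<Longrightarrow> x * y \<in> A"
    and Aneg: "\<And>x. x \<in> A \<Longrightarrow> - x \<in> A"
    and nA: "n \<subseteq> A" and n0: "0 \<in> n"
    and nadd: "\<And>x y. x \<in> n \<Longrightarrow> y \<in> n \<Longrightarrow> x + y \<in> n"
    and nmul: "\<And>r x. r \<in> A \<Longrightarrow> x \<in> n \<Longrightarrow> r * x \<in> n"
    and one_n: "1 \<notin> n"
    and unit: "\<And>x. x \<in> A \<Longrightarrow> x \<notin> n \<Longrightarrow> inverse x \<in> A"
begin

lemma Adiff: "x \<in> A \<Longrightarrow> y \<in> A \<Longrightarrow> x - y \<in> A"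
  using Aadd Aneg by (metis diff_conv_add_uminus)

lemma nneg: "x \<in> n \<Longrightarrow> - x \<in> n"
  using nmul[of "-1" x] A1 Aneg by simp

lemma ndiff: "x \<in> n \<Longrightarrow> y \<in> n \<Longrightarrow> x - y \<in> n"
  using nadd nneg by (metis diff_conv_add_uminus)

lemma nmul2: "r \<in> A \<Longrightarrow> x \<in> n \<Longrightarrow> x * r \<in> n"
  using nmul by (metis mult.commute)

lemma nz: "x \<notin> n \<Longrightarrow> x \<noteq> 0" using n0 by auto

lemma inv_A: "x \<in> A \<Longrightarrow> x \<notin> n \<Longrightarrow> inverse x \<in> A \<and> inverse x * x = 1"
  using unit nz by auto

lemma one_minus: "v \<in> n \<Longrightarrow> 1 - v \<in> A \<and> 1 - v \<notin> n"
proof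
  assume v: "v \<in> n"
  show "1 - v \<in> A" using Adiff A1 nA v by auto
  show "1 - v \<notin> n"
  proof
    assume "1 - v \<in> n" then have "(1 - v) + v \<in> n" using nadd v by blast
    then show False using one_n by simp
  qed
qed

definition subm :: "'b set \<Rightarrow> bool" where
  "subm S \<longleftrightarrow> 0 \<in> S \<and> (\<forall>u\<in>S. \<forall>v\<in>S. u + v \<in> S) \<and> (\<forall>r\<in>A. \<forall>u\<in>S. r * u \<in> S)"

lemma submD: assumes "subm S"
  shows "0 \<in> S" "u \<in> S \<Longrightarrow> v \<in> S \<Longrightarrow> u + v \<in> S" "r \<in> A \<Longrightarrow> u \<in> S \<Longrightarrow> r * u \<in> S"
  using assms unfolding subm_def by auto

lemma subm_neg: "subm S \<Longrightarrow> u \<in> S \<Longrightarrow> - u \<in> S"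
  using submD(3)[of S "-1" u] A1 Aneg by simp

lemma subm_diff: "subm S \<Longrightarrow> u \<in> S \<Longrightarrow> v \<in> S \<Longrightarrow> u - v \<in> S"
  using submD(2) subm_neg by (metis diff_conv_add_uminus)

definition sp3 :: "'b set \<Rightarrow> 'b \<Rightarrow> 'b \<Rightarrow> 'b \<Rightarrow> 'b set" where
  "sp3 C a b c = {r1 * a + r2 * b + r3 * c | r1 r2 r3. r1 \<in> C \<and> r2 \<in> C \<and> r3 \<in> C}"

lemma sp3_swap12: "sp3 C a b c = sp3 C b a c"
proof -
  have "\<And>a b c. sp3 C a b c \<subseteq> sp3 C b a c"
  proof
    fix a b c x assume "x \<in> sp3 C a b c"
    then obtain r1 r2 r3 where "r1 \<in> C" "r2 \<in> C" "r3 \<in> C" "x = r1 * a + r2 * b + r3 * c"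
      unfolding sp3_def by blast
    then have "x = r2 * b + r1 * a + r3 * c \<and> r2 \<in> C \<and> r1 \<in> C \<and> r3 \<in> C" by (simp add: ac_simps)
    then show "x \<in> sp3 C b a c" unfolding sp3_def by blast
  qed
  then show ?thesis by blast
qed

lemma sp3_swap23: "sp3 C a b c = sp3 C a c b"
proof -
  have "\<And>a b c. sp3 C a b c \<subseteq> sp3 C a c b"
  proof
    fix a b c x assume "x \<in> sp3 C a b c"
    then obtain r1 r2 r3 where "r1 \<in> C" "r2 \<in> C" "r3 \<in> C" "x = r1 * a + r2 * b + r3 * c"
      unfolding sp3_def by blast
    then have "x = r1 * a + r3 * c + r2 * b \<and> r1 \<in> C \<and> r3 \<in> C \<and> r2 \<in> C" by (simp add: ac_simps)
    then show "x \<in> sp3 C a c b" unfolding sp3_def by blast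
  qed
  then show ?thesis by blast
qed

lemma sp3_swap13: "sp3 C a b c = sp3 C c b a"
  using sp3_swap12[of C a b c] sp3_swap23[of C b a c] sp3_swap12[of C b c a] by simp

lemma sp3I: "r1 \<in> C \<Longrightarrow> r2 \<in> C \<Longrightarrow> r3 \<in> C \<Longrightarrow> r1 * a + r2 * b + r3 * c \<in> sp3 C a b c"
  unfolding sp3_def by blast

lemma sp3E: "x \<in> sp3 C a b c \<Longrightarrow> (\<And>r1 r2 r3. r1 \<in> C \<Longrightarrow> r2 \<in> C \<Longrightarrow> r3 \<in> C \<Longrightarrow> x = r1 * a + r2 * b + r3 * c \<Longrightarrow> P) \<Longrightarrow> P"
  unfolding sp3_def by blast

lemma subm_sp3A: "subm (sp3 A a b c)"
  unfolding subm_def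
proof (intro conjI ballI)
  show "0 \<in> sp3 A a b c" using sp3I[OF A0 A0 A0, of a b c] by simp
next
  fix u v assume "u \<in> sp3 A a b c" "v \<in> sp3 A a b c"
  then show "u + v \<in> sp3 A a b c"
    apply (elim sp3E)
    subgoal for r1 r2 r3 s1 s2 s3
      using sp3I[OF Aadd Aadd Aadd, of r1 s1 r2 s2 r3 s3 a b c] by (simp add: algebra_simps)
    done
next
  fix r u assume "r \<in> A" "u \<in> sp3 A a b c"
  then show "r * u \<in> sp3 A a b c"
    apply (elim sp3E)
    subgoal for r1 r2 r3
      using sp3I[OF Amul Amul Amul, of r r1 r r2 r r3 a b c] by (simp add: algebra_simps)
    done
qed

lemma subm_sp3n: "subm (sp3 n a b c)"
  unfolding subm_def
proof (intro conjI ballI)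
  show "0 \<in> sp3 n a b c" using sp3I[OF n0 n0 n0, of a b c] by simp
next
  fix u v assume "u \<in> sp3 n a b c" "v \<in> sp3 n a b c"
  then show "u + v \<in> sp3 n a b c"
    apply (elim sp3E)
    subgoal for r1 r2 r3 s1 s2 s3
      using sp3I[OF nadd nadd nadd, of r1 s1 r2 s2 r3 s3 a b c] by (simp add: algebra_simps)
    done
next
  fix r u assume "r \<in> A" "u \<in> sp3 n a b c"
  then show "r * u \<in> sp3 n a b c"
    apply (elim sp3E)
    subgoal for r1 r2 r3
      using sp3I[OF nmul nmul nmul, of r r1 r r2 r r3 a b c] by (simp add: algebra_simps)
    done
qed

lemma n_times_K: assumes "v \<in> n" "k \<in> sp3 A a b c" shows "v * k \<in> sp3 n a b c"
proof -
  obtain r1 r2 r3 where r: "r1 \<in> A" "r2 \<in> A" "r3 \<in> A" "k = r1 * a + r2 * b + r3 * c"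
    using assms(2) by (elim sp3E) blast
  have "(r1 * v) * a + (r2 * v) * b + (r3 * v) * c \<in> sp3 n a b c"
    by (rule sp3I) (use nmul r assms(1) in \<open>auto simp: mult.commute\<close>)
  then show ?thesis using r(4) by (simp add: algebra_simps)
qed

lemma gen_in: "a \<in> sp3 A a b c" "b \<in> sp3 A a b c" "c \<in> sp3 A a b c"
  using sp3I[OF A1 A0 A0, of a b c] sp3I[OF A0 A1 A0, of a b c] sp3I[OF A0 A0 A1, of a b c] by simp_all

lemma nsp3_mono: assumes "sp3 A a b c \<subseteq> sp3 A a' b' c'"
  shows "sp3 n a b c \<subseteq> sp3 n a' b' c'"
proof
  fix x assume "x \<in> sp3 n a b c"
  then obtain v1 v2 v3 where v: "v1 \<in> n" "v2 \<in> n" "v3 \<in> n" "x = v1 * a + v2 * b + v3 * c"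
    by (elim sp3E) blast
  have "a \<in> sp3 A a' b' c'" "b \<in> sp3 A a' b' c'" "c \<in> sp3 A a' b' c'"
    using gen_in assms by auto
  then have "v1 * a \<in> sp3 n a' b' c'" "v2 * b \<in> sp3 n a' b' c'" "v3 * c \<in> sp3 n a' b' c'"
    using n_times_K v by auto
  then show "x \<in> sp3 n a' b' c'" unfolding v(4) by (intro submD(2)[OF subm_sp3n])
qed

lemma nsp3_eq: "sp3 A a b c = sp3 A a' b' c' \<Longrightarrow> sp3 n a b c = sp3 n a' b' c'"
  using nsp3_mono by blast

lemma elim1: assumes "v \<in> n" "g = x + v * g"
  shows "inverse (1 - v) \<in> A \<and> g = inverse (1 - v) * x"
proof -
  have u: "1 - v \<in> A" "1 - v \<notin> n" using one_minus assms(1) by auto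
  have "(1 - v) * g = x" using assms(2) by (simp add: algebra_simps)
  then have "g = inverse (1 - v) * x" using nz[OF u(2)] by (metis field_class.field_inverse mult.assoc mult_1)
  then show ?thesis using unit u by auto
qed

definition msum :: "'b set \<Rightarrow> 'b set \<Rightarrow> 'b set" where
  "msum S T = {s + t | s t. s \<in> S \<and> t \<in> T}"

lemma msumI: "s \<in> S \<Longrightarrow> t \<in> T \<Longrightarrow> s + t \<in> msum S T"
  unfolding msum_def by blast

lemma msumE: "x \<in> msum S T \<Longrightarrow> (\<And>s t. s \<in> S \<Longrightarrow> t \<in> T \<Longrightarrow> x = s + t \<Longrightarrow> P) \<Longrightarrow> P"
  unfolding msum_def by blast

lemma nakayama:
  assumes S: "subm S" and K: "sp3 A a b c \<subseteq> msum S (sp3 n a b c)"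
  shows "sp3 A a b c \<subseteq> S"
proof -
  have "c \<in> msum S (sp3 n a b c)" using K gen_in by auto
  then obtain s0 v1 v2 v3 where h: "s0 \<in> S" "v1 \<in> n" "v2 \<in> n" "v3 \<in> n"
     "c = s0 + (v1 * a + v2 * b + v3 * c)"
    unfolding msum_def by (auto elim!: sp3E)
  have "c = (s0 + v1 * a + v2 * b) + v3 * c" using h(5) by (simp add: algebra_simps)
  from elim1[OF h(4) this] obtain u where u: "u \<in> A" "c = u * (s0 + v1 * a + v2 * b)" by blast
  define s1 where "s1 = u * s0"
  define al where "al = u * v1"
  define be where "be = u * v2"
  have c1: "s1 \<in> S" "al \<in> A" "be \<in> A"
    using u h submD(3)[OF S] Amul nA unfolding s1_def al_def be_def by auto
  have c1e: "c = s1 + al * a + be * b" using u(2) unfolding s1_def al_def be_def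
    by (simp add: algebra_simps)
  have "b \<in> msum S (sp3 n a b c)" using K gen_in by auto
  then obtain t0 w1 w2 w3 where h2: "t0 \<in> S" "w1 \<in> n" "w2 \<in> n" "w3 \<in> n"
     "b = t0 + (w1 * a + w2 * b + w3 * c)"
    unfolding msum_def by (auto elim!: sp3E)
  have mu: "w2 + w3 * be \<in> n" using nadd nmul2 h2 c1 by auto
  have "b = (t0 + w3 * s1 + (w1 + w3 * al) * a) + (w2 + w3 * be) * b"
    using h2(5) c1e by (simp add: algebra_simps)
  from elim1[OF mu this] obtain u2 where u2: "u2 \<in> A"
    "b = u2 * (t0 + w3 * s1 + (w1 + w3 * al) * a)" by blast
  define s2 where "s2 = u2 * (t0 + w3 * s1)"
  define de where "de = u2 * (w1 + w3 * al)"
  have w13: "w1 \<in> A" "w3 \<in> A" using nA h2 by auto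
  have b1: "s2 \<in> S" "de \<in> A"
    unfolding s2_def de_def
    by (intro submD(2)[OF S] submD(3)[OF S] Amul Aadd u2(1) h2(1) c1 w13)+
  have b1e: "b = s2 + de * a" using u2(2) unfolding s2_def de_def by (simp add: algebra_simps)
  define s3 where "s3 = s1 + be * s2"
  define ep where "ep = al + be * de"
  have c2: "s3 \<in> S" "ep \<in> A"
    unfolding s3_def ep_def by (intro submD(2)[OF S] submD(3)[OF S] Amul Aadd c1 b1)+
  have c2e: "c = s3 + ep * a" using c1e b1e unfolding s3_def ep_def by (simp add: algebra_simps)
  have "a \<in> msum S (sp3 n a b c)" using K gen_in by auto
  then obtain q0 z1 z2 z3 where h3: "q0 \<in> S" "z1 \<in> n" "z2 \<in> n" "z3 \<in> n"
     "a = q0 + (z1 * a + z2 * b + z3 * c)"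
    unfolding msum_def by (auto elim!: sp3E)
  have mu3: "z1 + z2 * de + z3 * ep \<in> n" using nadd nmul2 h3 b1 c2 by auto
  have "a = (q0 + z2 * s2 + z3 * s3) + (z1 + z2 * de + z3 * ep) * a"
    using h3(5) b1e c2e by (simp add: algebra_simps)
  from elim1[OF mu3 this] obtain u3 where u3: "u3 \<in> A"
    "a = u3 * (q0 + z2 * s2 + z3 * s3)" by blast
  have z23: "z2 \<in> A" "z3 \<in> A" using nA h3 by auto
  have aS: "a \<in> S" unfolding u3(2)
    by (intro submD(2)[OF S] submD(3)[OF S] u3(1) h3(1) b1 c2 z23)+
  have bS: "b \<in> S" unfolding b1e by (intro submD(2)[OF S] submD(3)[OF S] b1 aS)
  have cS: "c \<in> S" unfolding c2e by (intro submD(2)[OF S] submD(3)[OF S] c2 aS)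
  show ?thesis
  proof
    fix x assume "x \<in> sp3 A a b c"
    then obtain r1 r2 r3 where "r1 \<in> A" "r2 \<in> A" "r3 \<in> A" "x = r1 * a + r2 * b + r3 * c"
      by (elim sp3E)
    then show "x \<in> S" by (simp only:) (intro submD(2)[OF S] submD(3)[OF S] aS bS cS)
  qed
qed

lemma exchange:
  assumes s: "s1 \<in> A" "s2 \<in> A" "s3 \<in> A" "s3 \<notin> n" and v: "v = s1 * g1 + s2 * g2 + s3 * g3"
  shows "sp3 A g1 g2 g3 = sp3 A g1 g2 v"
proof
  show "sp3 A g1 g2 v \<subseteq> sp3 A g1 g2 g3"
  proof
    fix x assume "x \<in> sp3 A g1 g2 v"
    then obtain r1 r2 r3 where r: "r1 \<in> A" "r2 \<in> A" "r3 \<in> A" "x = r1 * g1 + r2 * g2 + r3 * v"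
      by (elim sp3E)
    have "x = (r1 + r3 * s1) * g1 + (r2 + r3 * s2) * g2 + (r3 * s3) * g3"
      using r(4) v by (simp add: algebra_simps)
    moreover have "(r1 + r3 * s1) * g1 + (r2 + r3 * s2) * g2 + (r3 * s3) * g3 \<in> sp3 A g1 g2 g3"
      by (intro sp3I Aadd Amul r s)
    ultimately show "x \<in> sp3 A g1 g2 g3" by simp
  qed
next
  show "sp3 A g1 g2 g3 \<subseteq> sp3 A g1 g2 v"
  proof
    fix x assume "x \<in> sp3 A g1 g2 g3"
    then obtain r1 r2 r3 where r: "r1 \<in> A" "r2 \<in> A" "r3 \<in> A" "x = r1 * g1 + r2 * g2 + r3 * g3"
      by (elim sp3E)
    define t where "t = inverse s3"
    have t: "t \<in> A" "t * s3 = 1" using inv_A[OF s(3,4)] unfolding t_def by auto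
    have g3: "g3 = t * v - t * s1 * g1 - t * s2 * g2"
    proof -
      have "t * v = t * s1 * g1 + t * s2 * g2 + (t * s3) * g3" using v by (simp add: algebra_simps)
      then show ?thesis using t(2) by simp
    qed
    have "x = (r1 - r3 * t * s1) * g1 + (r2 - r3 * t * s2) * g2 + (r3 * t) * v"
      using r(4) g3 by (simp add: algebra_simps)
    moreover have "(r1 - r3 * t * s1) * g1 + (r2 - r3 * t * s2) * g2 + (r3 * t) * v \<in> sp3 A g1 g2 v"
      by (intro sp3I Adiff Amul r s t)
    ultimately show "x \<in> sp3 A g1 g2 v" by simp
  qed
qed

lemma dim3:
  assumes u: "u1 \<in> sp3 A a b c" "u2 \<in> sp3 A a b c" "u3 \<in> sp3 A a b c"
    and i1: "u1 \<notin> sp3 n a b c"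
    and i2: "u2 \<notin> msum {r * u1 | r. r \<in> A} (sp3 n a b c)"
    and i3: "u3 \<notin> msum {r1 * u1 + r2 * u2 | r1 r2. r1 \<in> A \<and> r2 \<in> A} (sp3 n a b c)"
  shows "sp3 A a b c = sp3 A u1 u2 u3"
proof -
  obtain s1 s2 s3 where s: "s1 \<in> A" "s2 \<in> A" "s3 \<in> A" "u1 = s1 * a + s2 * b + s3 * c"
    using u(1) by (elim sp3E)
  have "\<not> (s1 \<in> n \<and> s2 \<in> n \<and> s3 \<in> n)"
    using i1 s(4) sp3I[of s1 n s2 s3 a b c] by auto
  then have "s3 \<notin> n \<or> s2 \<notin> n \<or> s1 \<notin> n" by blast
  then have "\<exists>g g'. sp3 A a b c = sp3 A g g' u1"
  proof (elim disjE)
    assume "s3 \<notin> n" then show ?thesis using exchange[OF s(1,2,3) _ s(4)] by blast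
  next
    assume "s2 \<notin> n"
    have "u1 = s1 * a + s3 * c + s2 * b" using s(4) by (simp add: ac_simps)
    then show ?thesis using exchange[OF s(1,3,2) \<open>s2 \<notin> n\<close>] sp3_swap23[of A a b c] by metis
  next
    assume "s1 \<notin> n"
    have "u1 = s3 * c + s2 * b + s1 * a" using s(4) by (simp add: ac_simps)
    then show ?thesis using exchange[OF s(3,2,1) \<open>s1 \<notin> n\<close>] sp3_swap13[of A a b c] by metis
  qed
  then obtain g g' where K1: "sp3 A a b c = sp3 A g g' u1" by blast
  have N1: "sp3 n a b c = sp3 n g g' u1" using nsp3_eq[OF K1] .
  obtain t1 t2 t3 where t: "t1 \<in> A" "t2 \<in> A" "t3 \<in> A" "u2 = t1 * g + t2 * g' + t3 * u1"
    using u(2) K1 by (auto elim: sp3E)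
  have "\<not> (t1 \<in> n \<and> t2 \<in> n)"
  proof
    assume tn: "t1 \<in> n \<and> t2 \<in> n"
    have "t1 * g + t2 * g' + 0 * u1 \<in> sp3 n a b c" unfolding N1 using tn n0 by (intro sp3I) auto
    moreover have "t3 * u1 \<in> {r * u1 | r. r \<in> A}" using t by blast
    ultimately have "t3 * u1 + (t1 * g + t2 * g' + 0 * u1) \<in> msum {r * u1 | r. r \<in> A} (sp3 n a b c)"
      by (intro msumI)
    then have "u2 \<in> msum {r * u1 | r. r \<in> A} (sp3 n a b c)"
      using t(4) by (simp add: ac_simps)
    then show False using i2 by blast
  qed
  then have "t2 \<notin> n \<or> t1 \<notin> n" by blast
  then have "\<exists>h. sp3 A a b c = sp3 A h u1 u2"
  proof (elim disjE)
    assume "t2 \<notin> n"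
    have "u2 = t1 * g + t3 * u1 + t2 * g'" using t(4) by (simp add: ac_simps)
    then show ?thesis using exchange[OF t(1,3,2) \<open>t2 \<notin> n\<close>] sp3_swap23[of A g g' u1] K1 by metis
  next
    assume "t1 \<notin> n"
    have "u2 = t2 * g' + t3 * u1 + t1 * g" using t(4) by (simp add: ac_simps)
    moreover have "sp3 A g g' u1 = sp3 A g' u1 g"
      using sp3_swap12[of A g g' u1] sp3_swap23[of A g' g u1] by simp
    ultimately show ?thesis using exchange[OF t(2,3,1) \<open>t1 \<notin> n\<close>] K1 by metis
  qed
  then obtain h where K2: "sp3 A a b c = sp3 A h u1 u2" by blast
  have N2: "sp3 n a b c = sp3 n h u1 u2" using nsp3_eq[OF K2] .
  obtain q1 q2 q3 where q: "q1 \<in> A" "q2 \<in> A" "q3 \<in> A" "u3 = q1 * h + q2 * u1 + q3 * u2"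
    using u(3) K2 by (auto elim: sp3E)
  have "q1 \<notin> n"
  proof
    assume qn: "q1 \<in> n"
    have "q1 * h + 0 * u1 + 0 * u2 \<in> sp3 n a b c" unfolding N2 using qn n0 by (intro sp3I) auto
    moreover have "q2 * u1 + q3 * u2 \<in> {r1 * u1 + r2 * u2 | r1 r2. r1 \<in> A \<and> r2 \<in> A}" using q by blast
    ultimately have "(q2 * u1 + q3 * u2) + (q1 * h + 0 * u1 + 0 * u2) \<in> msum {r1 * u1 + r2 * u2 | r1 r2. r1 \<in> A \<and> r2 \<in> A} (sp3 n a b c)"
      by (intro msumI)
    then have "u3 \<in> msum {r1 * u1 + r2 * u2 | r1 r2. r1 \<in> A \<and> r2 \<in> A} (sp3 n a b c)"
      using q(4) by (simp add: ac_simps)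
    then show False using i3 by blast
  qed
  have "u3 = q2 * u1 + q3 * u2 + q1 * h" using q(4) by (simp add: ac_simps)
  moreover have "sp3 A h u1 u2 = sp3 A u1 u2 h"
    using sp3_swap12[of A h u1 u2] sp3_swap23[of A u1 h u2] by simp
  ultimately show ?thesis using exchange[OF q(2,3,1) \<open>q1 \<notin> n\<close>] K2 by metis
qed

lemma subm_msum: assumes "subm S" "subm T" shows "subm (msum S T)"
  unfolding subm_def
proof (intro conjI ballI)
  show "0 \<in> msum S T" using msumI[OF submD(1)[OF assms(1)] submD(1)[OF assms(2)]] by simp
next
  fix u v assume "u \<in> msum S T" "v \<in> msum S T"
  then obtain s1 t1 s2 t2 where h: "s1 \<in> S" "t1 \<in> T" "u = s1 + t1" "s2 \<in> S" "t2 \<in> T" "v = s2 + t2"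
    by (elim msumE) blast
  have "(s1 + s2) + (t1 + t2) \<in> msum S T"
    by (intro msumI submD(2)[OF assms(1)] submD(2)[OF assms(2)] h)
  then show "u + v \<in> msum S T" using h by (simp add: ac_simps)
next
  fix r u assume r: "r \<in> A" and "u \<in> msum S T"
  then obtain s1 t1 where h: "s1 \<in> S" "t1 \<in> T" "u = s1 + t1"
    by (elim msumE) blast
  have "(r * s1) + (r * t1) \<in> msum S T"
    by (intro msumI submD(3)[OF assms(1)] submD(3)[OF assms(2)] h r)
  then show "r * u \<in> msum S T" using h by (simp add: algebra_simps)
qed

lemma subm_line: "subm {r * p | r. r \<in> A}"
  unfolding subm_def
proof (intro conjI ballI)
  show "0 \<in> {r * p | r. r \<in> A}" using A0 by force
next
  fix u v assume "u \<in> {r * p | r. r \<in> A}" "v \<in> {r * p | r. r \<in> A}"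
  then obtain r1 r2 where "r1 \<in> A" "r2 \<in> A" "u = r1 * p" "v = r2 * p" by blast
  then show "u + v \<in> {r * p | r. r \<in> A}" using Aadd
    by (intro CollectI exI[of _ "r1 + r2"]) (simp add: algebra_simps)
next
  fix r u assume "r \<in> A" "u \<in> {r * p | r. r \<in> A}"
  then obtain r1 where "r1 \<in> A" "u = r1 * p" by blast
  then show "r * u \<in> {r * p | r. r \<in> A}" using Amul \<open>r \<in> A\<close>
    by (intro CollectI exI[of _ "r * r1"]) (simp add: algebra_simps)
qed

lemma key:
  assumes p2: "p2 \<in> sp3 A a b c" "p2 \<notin> msum {r * p1 | r. r \<in> A} (sp3 n a b c)"
    and q1: "q \<in> msum {r * p1 | r. r \<in> A} (sp3 n a b c)"
    and q2: "q \<in> msum {r * p2 | r. r \<in> A} (sp3 n a b c)"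
  shows "q \<in> sp3 n a b c"
proof -
  obtain al w1 where h1: "al \<in> A" "w1 \<in> sp3 n a b c" "q = al * p1 + w1"
    using q1 by (elim msumE) blast
  obtain be w2 where h2: "be \<in> A" "w2 \<in> sp3 n a b c" "q = be * p2 + w2"
    using q2 by (elim msumE) blast
  show ?thesis
  proof (cases "be \<in> n")
    case True
    then show ?thesis unfolding h2(3)
      by (intro submD(2)[OF subm_sp3n] n_times_K p2(1) h2(2))
  next
    case False
    define t where "t = inverse be"
    have t: "t \<in> A" "t * be = 1" using inv_A[OF h2(1) False] unfolding t_def by auto
    have "t * q = t * be * p2 + t * w2" using h2(3) by (simp add: algebra_simps)
    then have "p2 = t * q - t * w2" using t(2) by simp
    also have "\<dots> = (t * al) * p1 + (t * w1 - t * w2)" using h1(3) by (simp add: algebra_simps)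
    finally have "p2 \<in> msum {r * p1 | r. r \<in> A} (sp3 n a b c)"
      using t(1) h1(1) by (auto intro!: msumI subm_diff[OF subm_sp3n] submD(3)[OF subm_sp3n] Amul h1 h2)
    then show ?thesis using p2(2) by blast
  qed
qed

definition setting :: "'b set \<Rightarrow> 'b set \<Rightarrow> 'b \<Rightarrow> 'b \<Rightarrow> 'b \<Rightarrow> bool" where
  "setting I J a b c \<longleftrightarrow> subm I \<and> subm J \<and> (\<forall>i\<in>I. \<forall>j\<in>J. i * j \<in> sp3 A a b c) \<and>
     (\<forall>S. subm S \<longrightarrow> (\<forall>i\<in>I. \<forall>j\<in>J. i * j \<in> S) \<longrightarrow> sp3 A a b c \<subseteq> S)"

lemma setting_swap: "setting I J a b c \<Longrightarrow> setting J I a b c"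
proof -
  have e: "\<And>S. (\<forall>i\<in>J. \<forall>j\<in>I. i * j \<in> S) = (\<forall>i\<in>I. \<forall>j\<in>J. i * j \<in> S)"
    by (metis mult.commute)
  show "setting I J a b c \<Longrightarrow> setting J I a b c" unfolding setting_def e by simp
qed

lemma setting_gen: assumes "setting I J a b c" "subm S" "\<And>i j. i \<in> I \<Longrightarrow> j \<in> J \<Longrightarrow> i * j \<in> S"
  shows "sp3 A a b c \<subseteq> S"
  using assms unfolding setting_def by blast

lemma setting_prod: "setting I J a b c \<Longrightarrow> i \<in> I \<Longrightarrow> j \<in> J \<Longrightarrow> i * j \<in> sp3 A a b c"
  unfolding setting_def by blast

lemma setting_I: "setting I J a b c \<Longrightarrow> subm I" and setting_J: "setting I J a b c \<Longrightarrow> subm J"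
  unfolding setting_def by blast+

lemma rank2:
  assumes st: "setting I J a b c" and x: "x \<in> I" and j: "j1 \<in> J" "j2 \<in> J"
    and i1: "x * j1 \<notin> sp3 n a b c"
    and i2: "x * j2 \<notin> msum {r * (x * j1) | r. r \<in> A} (sp3 n a b c)"
  shows "x \<noteq> 0 \<and> (\<exists>i\<in>I. \<exists>j\<in>J. sp3 A a b c = {r * (i * j) + x * z | r z. r \<in> A \<and> z \<in> J})"
proof -
  have I: "subm I" and J: "subm J" using st setting_I setting_J by auto
  have x0: "x \<noteq> 0" using i1 submD(1)[OF subm_sp3n] by auto
  define S0 where "S0 = {x * z | z. z \<in> J}"
  have S0: "subm S0" unfolding subm_def S0_def
  proof (intro conjI ballI)
    show "0 \<in> {x * z | z. z \<in> J}" using submD(1)[OF J] by force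
  next
    fix u v assume "u \<in> {x * z | z. z \<in> J}" "v \<in> {x * z | z. z \<in> J}"
    then obtain z1 z2 where "z1 \<in> J" "z2 \<in> J" "u = x * z1" "v = x * z2" by blast
    then show "u + v \<in> {x * z | z. z \<in> J}"
      by (intro CollectI exI[of _ "z1 + z2"]) (simp add: algebra_simps submD(2)[OF J])
  next
    fix r u assume "r \<in> A" "u \<in> {x * z | z. z \<in> J}"
    then obtain z1 where "z1 \<in> J" "u = x * z1" by blast
    then show "r * u \<in> {x * z | z. z \<in> J}" using \<open>r \<in> A\<close>
      by (intro CollectI exI[of _ "r * z1"]) (simp add: algebra_simps submD(3)[OF J])
  qed
  have K: "subm (sp3 A a b c)" by (rule subm_sp3A)
  define M where "M = msum {r1 * (x * j1) + r2 * (x * j2) | r1 r2. r1 \<in> A \<and> r2 \<in> A} (sp3 n a b c)"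
  show ?thesis
  proof (cases "\<forall>i\<in>I. \<forall>j\<in>J. i * j \<in> M")
    case True
    have "sp3 A a b c \<subseteq> msum S0 (sp3 n a b c)"
    proof (rule setting_gen[OF st subm_msum[OF S0 subm_sp3n]])
      fix i j assume "i \<in> I" "j \<in> J"
      then have "i * j \<in> M" using True by blast
      then obtain r1 r2 w where h: "r1 \<in> A" "r2 \<in> A" "w \<in> sp3 n a b c" "i * j = r1 * (x * j1) + r2 * (x * j2) + w"
        unfolding M_def by (elim msumE) blast
      have "x * (r1 * j1 + r2 * j2) \<in> S0" unfolding S0_def
        using submD(2)[OF J] submD(3)[OF J] h j by blast
      then have "x * (r1 * j1 + r2 * j2) + w \<in> msum S0 (sp3 n a b c)" using h(3) by (rule msumI)
      then show "i * j \<in> msum S0 (sp3 n a b c)" using h(4) by (simp add: algebra_simps)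
    qed
    then have KS: "sp3 A a b c \<subseteq> S0" by (rule nakayama[OF S0])
    have "sp3 A a b c = {r * (0 * 0) + x * z | r z. r \<in> A \<and> z \<in> J}"
    proof
      show "sp3 A a b c \<subseteq> {r * (0 * 0) + x * z | r z. r \<in> A \<and> z \<in> J}"
        using KS A0 unfolding S0_def by force
      show "{r * (0 * 0) + x * z | r z. r \<in> A \<and> z \<in> J} \<subseteq> sp3 A a b c"
        using setting_prod[OF st x] by force
    qed
    then show ?thesis using x0 submD(1)[OF I] submD(1)[OF J] by blast
  next
    case False
    then obtain i j where ij: "i \<in> I" "j \<in> J" "i * j \<notin> M" by blast
    have eq: "sp3 A a b c = sp3 A (x * j1) (x * j2) (i * j)"
      by (rule dim3) (use setting_prod[OF st] x j ij i1 i2 in \<open>auto simp: M_def\<close>)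
    have "sp3 A a b c = {r * (i * j) + x * z | r z. r \<in> A \<and> z \<in> J}"
    proof
      show "sp3 A a b c \<subseteq> {r * (i * j) + x * z | r z. r \<in> A \<and> z \<in> J}"
      proof
        fix w assume "w \<in> sp3 A a b c"
        then obtain r1 r2 r3 where h: "r1 \<in> A" "r2 \<in> A" "r3 \<in> A" "w = r1 * (x * j1) + r2 * (x * j2) + r3 * (i * j)"
          unfolding eq by (elim sp3E)
        have "r1 * j1 + r2 * j2 \<in> J" using submD(2)[OF J] submD(3)[OF J] h j by blast
        moreover have "w = r3 * (i * j) + x * (r1 * j1 + r2 * j2)" using h(4) by (simp add: algebra_simps)
        ultimately show "w \<in> {r * (i * j) + x * z | r z. r \<in> A \<and> z \<in> J}" using h(3) by blast
      qed
      show "{r * (i * j) + x * z | r z. r \<in> A \<and> z \<in> J} \<subseteq> sp3 A a b c"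
      proof
        fix w assume "w \<in> {r * (i * j) + x * z | r z. r \<in> A \<and> z \<in> J}"
        then obtain r z where h: "r \<in> A" "z \<in> J" "w = r * (i * j) + x * z" by blast
        show "w \<in> sp3 A a b c" unfolding h(3)
          by (intro submD(2)[OF K] submD(3)[OF K] h setting_prod[OF st] ij x)
      qed
    qed
    then show ?thesis using x0 ij by blast
  qed
qed

lemma rank1_line:
  assumes st: "setting I J a b c"
    and R1: "\<And>x j1 j2. x \<in> I \<Longrightarrow> j1 \<in> J \<Longrightarrow> j2 \<in> J \<Longrightarrow> x * j1 \<notin> sp3 n a b c \<Longrightarrow>
              x * j2 \<in> msum {r * (x * j1) | r. r \<in> A} (sp3 n a b c)"
    and R2: "\<And>y i1 i2. y \<in> J \<Longrightarrow> i1 \<in> I \<Longrightarrow> i2 \<in> I \<Longrightarrow> i1 * y \<notin> sp3 n a b c \<Longrightarrow>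
              i2 * y \<in> msum {r * (i1 * y) | r. r \<in> A} (sp3 n a b c)"
  shows "\<exists>i1\<in>I. \<exists>j1\<in>J. \<forall>i\<in>I. \<forall>j\<in>J. i * j \<in> msum {r * (i1 * j1) | r. r \<in> A} (sp3 n a b c)"
proof (cases "\<forall>i\<in>I. \<forall>j\<in>J. i * j \<in> sp3 n a b c")
  case True
  have I: "subm I" and J: "subm J" using st setting_I setting_J by auto
  have "\<forall>i\<in>I. \<forall>j\<in>J. i * j \<in> msum {r * (0 * 0) | r. r \<in> A} (sp3 n a b c)"
  proof (intro ballI)
    fix i j assume "i \<in> I" "j \<in> J"
    then have "0 * (0 * 0) + i * j \<in> msum {r * (0 * 0) | r. r \<in> A} (sp3 n a b c)"
      using True A0 by (intro msumI) auto
    then show "i * j \<in> msum {r * (0 * 0) | r. r \<in> A} (sp3 n a b c)" by simp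
  qed
  then show ?thesis using submD(1)[OF I] submD(1)[OF J] by blast
next
  case False
  then obtain i1 j1 where ij1: "i1 \<in> I" "j1 \<in> J" "i1 * j1 \<notin> sp3 n a b c" by blast
  define N where "N = sp3 n a b c"
  define M1 where "M1 = msum {r * (i1 * j1) | r. r \<in> A} N"
  have NS: "subm N" unfolding N_def by (rule subm_sp3n)
  show ?thesis
  proof (rule ccontr)
    assume "\<not> ?thesis"
    then obtain i2 j2 where ij2: "i2 \<in> I" "j2 \<in> J" "i2 * j2 \<notin> M1"
      using ij1 unfolding M1_def N_def by blast
    have I: "subm I" and J: "subm J" using st setting_I setting_J by auto
    have p1K: "i1 * j1 \<in> sp3 A a b c" and p2K: "i2 * j2 \<in> sp3 A a b c"
      using setting_prod[OF st] ij1 ij2 by auto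
    have a: "i2 * j2 \<notin> N"
    proof
      assume "i2 * j2 \<in> N"
      then have "0 * (i1 * j1) + i2 * j2 \<in> M1" unfolding M1_def using A0 by (intro msumI) auto
      then show False using ij2 by simp
    qed
    have b: "i1 * j2 \<in> M1" unfolding M1_def N_def using R1[OF ij1(1,2) ij2(2) ij1(3)] .
    have c: "i1 * j2 \<in> msum {r * (i2 * j2) | r. r \<in> A} N"
      unfolding N_def using R2[OF ij2(2) ij2(1) ij1(1)] a unfolding N_def by blast
    have d12: "i1 * j2 \<in> N" unfolding N_def
      by (rule key[OF p2K _ b[unfolded M1_def N_def] c[unfolded N_def]])
        (use ij2(3) in \<open>simp add: M1_def N_def\<close>)
    have d: "i2 * j1 \<in> M1" unfolding M1_def N_def using R2[OF ij1(2) ij1(1) ij2(1) ij1(3)] .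
    have e: "i2 * j1 \<in> msum {r * (i2 * j2) | r. r \<in> A} N"
      using R1[OF ij2(1) ij2(2) ij1(2)] a unfolding N_def by blast
    have d21: "i2 * j1 \<in> N" unfolding N_def
      by (rule key[OF p2K _ d[unfolded M1_def N_def] e[unfolded N_def]])
        (use ij2(3) in \<open>simp add: M1_def N_def\<close>)
    define x where "x = i1 + i2"
    have xI: "x \<in> I" unfolding x_def using submD(2)[OF I] ij1 ij2 by blast
    have xj1: "x * j1 = i1 * j1 + i2 * j1" unfolding x_def by (simp add: algebra_simps)
    have xj2: "x * j2 = i1 * j2 + i2 * j2" unfolding x_def by (simp add: algebra_simps)
    have nx: "x * j1 \<notin> N"
    proof
      assume "x * j1 \<in> N"
      then have "x * j1 - i2 * j1 \<in> N" using subm_diff[OF NS] d21 by blast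
      then show False using ij1(3) xj1 unfolding N_def by simp
    qed
    have "x * j2 \<in> msum {r * (x * j1) | r. r \<in> A} N"
      using R1[OF xI ij1(2) ij2(2)] nx unfolding N_def by blast
    then obtain r w where rw: "r \<in> A" "w \<in> N" "x * j2 = r * (x * j1) + w"
      by (elim msumE) blast
    have h: "i1 * j2 + i2 * j2 = r * (i1 * j1 + i2 * j1) + w" using rw(3) xj1 xj2 by simp
    have "i2 * j2 = (i1 * j2 + i2 * j2) - i1 * j2" by simp
    also have "\<dots> = r * (i1 * j1 + i2 * j1) + w - i1 * j2" by (simp only: h)
    also have "\<dots> = r * (i1 * j1) + (r * (i2 * j1) + w - i1 * j2)" by (simp add: algebra_simps)
    finally have eqp: "i2 * j2 = r * (i1 * j1) + (r * (i2 * j1) + w - i1 * j2)" .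
    moreover have "r * (i2 * j1) + w - i1 * j2 \<in> N"
      by (intro subm_diff[OF NS] submD(2)[OF NS] submD(3)[OF NS] rw d21 d12)
    moreover have "r * (i1 * j1) \<in> {r * (i1 * j1) | r. r \<in> A}" using rw(1) by blast
    ultimately have "r * (i1 * j1) + (r * (i2 * j1) + w - i1 * j2) \<in> M1" unfolding M1_def
      by (intro msumI) 
    then have "i2 * j2 \<in> M1" by (simp only: eqp)
    then show False using ij2(3) by blast
  qed
qed

lemma core:
  assumes st: "setting I J a b c" and x0: "x0 \<in> I" "x0 \<noteq> 0"
  shows "(\<exists>x\<in>I. x \<noteq> 0 \<and> (\<exists>i\<in>I. \<exists>j\<in>J. sp3 A a b c = {r * (i * j) + x * z | r z. r \<in> A \<and> z \<in> J}))
    \<or> (\<exists>y\<in>J. y \<noteq> 0 \<and> (\<exists>i\<in>I. \<exists>j\<in>J. sp3 A a b c = {r * (i * j) + y * z | r z. r \<in> A \<and> z \<in> I}))"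
proof (cases "\<exists>x\<in>I. \<exists>j1\<in>J. \<exists>j2\<in>J. x * j1 \<notin> sp3 n a b c \<and> x * j2 \<notin> msum {r * (x * j1) | r. r \<in> A} (sp3 n a b c)")
  case True
  then obtain x j1 j2 where h: "x \<in> I" "j1 \<in> J" "j2 \<in> J" "x * j1 \<notin> sp3 n a b c"
    "x * j2 \<notin> msum {r * (x * j1) | r. r \<in> A} (sp3 n a b c)" by blast
  show ?thesis using rank2[OF st h] h(1) by blast
next
  case F1: False
  show ?thesis
  proof (cases "\<exists>y\<in>J. \<exists>i1\<in>I. \<exists>i2\<in>I. i1 * y \<notin> sp3 n a b c \<and> i2 * y \<notin> msum {r * (i1 * y) | r. r \<in> A} (sp3 n a b c)")
    case True
    then obtain y i1 i2 where h: "y \<in> J" "i1 \<in> I" "i2 \<in> I" "y * i1 \<notin> sp3 n a b c"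
      "y * i2 \<notin> msum {r * (y * i1) | r. r \<in> A} (sp3 n a b c)" by (auto simp: mult.commute)
    from rank2[OF setting_swap[OF st] h] obtain j i where ji: "j \<in> J" "i \<in> I" "y \<noteq> 0"
      "sp3 A a b c = {r * (j * i) + y * z | r z. r \<in> A \<and> z \<in> I}" by blast
    then have "sp3 A a b c = {r * (i * j) + y * z | r z. r \<in> A \<and> z \<in> I}"
      by (simp only: mult.commute[of j i])
    then show ?thesis using ji h(1) by blast
  next
    case F2: False
    have R1: "\<And>x j1 j2. x \<in> I \<Longrightarrow> j1 \<in> J \<Longrightarrow> j2 \<in> J \<Longrightarrow> x * j1 \<notin> sp3 n a b c \<Longrightarrow>
              x * j2 \<in> msum {r * (x * j1) | r. r \<in> A} (sp3 n a b c)" using F1 by blast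
    have R2: "\<And>y i1 i2. y \<in> J \<Longrightarrow> i1 \<in> I \<Longrightarrow> i2 \<in> I \<Longrightarrow> i1 * y \<notin> sp3 n a b c \<Longrightarrow>
              i2 * y \<in> msum {r * (i1 * y) | r. r \<in> A} (sp3 n a b c)" using F2 by blast
    obtain i1 j1 where ij: "i1 \<in> I" "j1 \<in> J"
      and all: "\<forall>i\<in>I. \<forall>j\<in>J. i * j \<in> msum {r * (i1 * j1) | r. r \<in> A} (sp3 n a b c)"
      using rank1_line[OF st R1 R2] by blast
    have J: "subm J" using st setting_J by auto
    have K: "subm (sp3 A a b c)" by (rule subm_sp3A)
    have "sp3 A a b c \<subseteq> msum {r * (i1 * j1) | r. r \<in> A} (sp3 n a b c)"
      by (rule setting_gen[OF st subm_msum[OF subm_line subm_sp3n]]) (use all in blast)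
    then have KS: "sp3 A a b c \<subseteq> {r * (i1 * j1) | r. r \<in> A}" by (rule nakayama[OF subm_line])
    have "sp3 A a b c = {r * (i1 * j1) + x0 * z | r z. r \<in> A \<and> z \<in> J}"
    proof
      show "sp3 A a b c \<subseteq> {r * (i1 * j1) + x0 * z | r z. r \<in> A \<and> z \<in> J}"
      proof
        fix w assume "w \<in> sp3 A a b c"
        then obtain r where "r \<in> A" "w = r * (i1 * j1)" using KS by blast
        then have "r \<in> A \<and> 0 \<in> J \<and> w = r * (i1 * j1) + x0 * 0" using submD(1)[OF J] by simp
        then show "w \<in> {r * (i1 * j1) + x0 * z | r z. r \<in> A \<and> z \<in> J}" by blast
      qed
      show "{r * (i1 * j1) + x0 * z | r z. r \<in> A \<and> z \<in> J} \<subseteq> sp3 A a b c"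
      proof
        fix w assume "w \<in> {r * (i1 * j1) + x0 * z | r z. r \<in> A \<and> z \<in> J}"
        then obtain r z where h: "r \<in> A" "z \<in> J" "w = r * (i1 * j1) + x0 * z" by blast
        show "w \<in> sp3 A a b c" unfolding h(3)
          by (intro submD(2)[OF K] submD(3)[OF K] h setting_prod[OF st] ij x0(1))
      qed
    qed
    then show ?thesis using x0 ij by blast
  qed
qed

end


definition primeI :: "'a::comm_ring_1 set \<Rightarrow> bool" where
  "primeI m \<longleftrightarrow> is_ideal m \<and> 1 \<notin> m \<and> (\<forall>x y. x * y \<in> m \<longrightarrow> x \<in> m \<or> y \<in> m)"

lemma idealD: assumes "is_ideal I"
  shows "0 \<in> I" "a \<in> I \<Longrightarrow> b \<in> I \<Longrightarrow> a + b \<in> I" "a \<in> I \<Longrightarrow> r * a \<in> I"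
  using assms unfolding is_ideal_def by auto

lemma maximal_prime: assumes "maximal_ideal m" shows "primeI m"
proof -
  have m: "is_ideal m" "m \<noteq> UNIV" and mx: "\<And>K. is_ideal K \<Longrightarrow> m \<subseteq> K \<Longrightarrow> K = m \<or> K = UNIV"
    using assms unfolding maximal_ideal_def by auto
  have one: "1 \<notin> m"
  proof
    assume "1 \<in> m"
    then have "\<And>r. r \<in> m" using idealD(3)[OF m(1), of 1] by (metis mult.right_neutral)
    then show False using m(2) by auto
  qed
  have pr: "x \<in> m \<or> y \<in> m" if xy: "x * y \<in> m" for x y
  proof (cases "x \<in> m")
    case True then show ?thesis by blast
  next
    case False note x = False
    define K where "K = {p + r * x | p r. p \<in> m}"
    have "is_ideal K" unfolding is_ideal_def K_def
    proof (intro conjI ballI allI)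
      show "0 \<in> {p + r * x | p r. p \<in> m}" using idealD(1)[OF m(1)]
        by (intro CollectI exI[of _ 0] exI[of _ 0]) simp
    next
      fix u v assume "u \<in> {p + r * x | p r. p \<in> m}" "v \<in> {p + r * x | p r. p \<in> m}"
      then obtain p1 r1 p2 r2 where "p1 \<in> m" "p2 \<in> m" "u = p1 + r1 * x" "v = p2 + r2 * x" by blast
      then show "u + v \<in> {p + r * x | p r. p \<in> m}" using idealD(2)[OF m(1)]
        by (intro CollectI exI[of _ "p1 + p2"] exI[of _ "r1 + r2"]) (simp add: algebra_simps)
    next
      fix s u assume "u \<in> {p + r * x | p r. p \<in> m}"
      then obtain p1 r1 where "p1 \<in> m" "u = p1 + r1 * x" by blast
      then show "s * u \<in> {p + r * x | p r. p \<in> m}" using idealD(3)[OF m(1)]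
        by (intro CollectI exI[of _ "s * p1"] exI[of _ "s * r1"]) (simp add: algebra_simps)
    qed
    moreover have "m \<subseteq> K" unfolding K_def
    proof
      fix p assume "p \<in> m" then show "p \<in> {p + r * x | p r. p \<in> m}"
        by (intro CollectI exI[of _ p] exI[of _ 0]) simp
    qed
    moreover have "x \<in> K" unfolding K_def using idealD(1)[OF m(1)]
      by (intro CollectI exI[of _ 0] exI[of _ 1]) simp
    ultimately have "K = UNIV" using mx x by blast
    then have "1 \<in> K" by simp
    then obtain p r where pr: "p \<in> m" "1 = p + r * x" using K_def by blast
    have "y = y * (p + r * x)" using pr(2) by simp
    also have "\<dots> = y * p + r * (x * y)" by (simp add: algebra_simps)
    finally have "y = y * p + r * (x * y)" .
    moreover have "y * p + r * (x * y) \<in> m" using idealD[OF m(1)] pr(1) xy by blast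
    ultimately show ?thesis by simp
  qed
  show ?thesis unfolding primeI_def using m(1) one pr by blast
qed

context
  fixes m :: "'a::idom set"
  assumes pm: "primeI m"
begin

lemma pm0: "0 \<in> m" using pm unfolding primeI_def is_ideal_def by blast
lemma pm1: "1 \<notin> m" using pm unfolding primeI_def by blast
lemma pmul: "s \<notin> m \<Longrightarrow> t \<notin> m \<Longrightarrow> s * t \<notin> m" using pm unfolding primeI_def by blast
lemma pnz: "s \<notin> m \<Longrightarrow> s \<noteq> 0" using pm0 by auto

lemma Fract_add_same: "s \<noteq> 0 \<Longrightarrow> Fract x s + Fract y s = Fract (x + y) s"
  by (simp add: eq_fract algebra_simps)

lemma loc_0: "is_ideal S \<Longrightarrow> 0 \<in> localize m S"
  unfolding localize_def using idealD(1) pm1 Zero_fract_def by blast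

lemma loc_add: assumes S: "is_ideal S" and u: "u \<in> localize m S" and v: "v \<in> localize m S"
  shows "u + v \<in> localize m S"
proof -
  obtain a s b t where h: "a \<in> S" "s \<notin> m" "u = Fract a s" "b \<in> S" "t \<notin> m" "v = Fract b t"
    using u v unfolding localize_def by blast
  have "u + v = Fract (t * a + s * b) (s * t)" using h pnz by (simp add: algebra_simps)
  moreover have "t * a + s * b \<in> S" using idealD[OF S] h by blast
  moreover have "s * t \<notin> m" using pmul h by blast
  ultimately show ?thesis unfolding localize_def by blast
qed

lemma loc_mul: assumes S: "is_ideal S" and r: "r \<in> localize m UNIV" and u: "u \<in> localize m S"
  shows "r * u \<in> localize m S"
proof -
  obtain a s b t where h: "s \<notin> m" "r = Fract a s" "b \<in> S" "t \<notin> m" "u = Fract b t"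
    using r u unfolding localize_def by blast
  have "r * u = Fract (a * b) (s * t)" using h by simp
  moreover have "a * b \<in> S" using idealD[OF S] h by blast
  moreover have "s * t \<notin> m" using pmul h by blast
  ultimately show ?thesis unfolding localize_def by blast
qed

lemma ideal_UNIV: "is_ideal (UNIV :: 'a set)" unfolding is_ideal_def by auto

lemma pm_ideal: "is_ideal m" using pm unfolding primeI_def by blast

lemma loc_neg: assumes "x \<in> localize m UNIV" shows "- x \<in> localize m UNIV"
proof -
  have "- 1 \<in> localize m UNIV" unfolding localize_def using pm1
    by (intro CollectI exI[of _ "-1"] exI[of _ 1]) (simp add: One_fract_def)
  then show ?thesis using loc_mul[OF ideal_UNIV _ assms] by (metis mult_minus1)
qed

lemma loc_interp: "loc (localize m UNIV) (localize m m)"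
proof
  show "0 \<in> localize m UNIV" by (rule loc_0[OF ideal_UNIV])
  show "1 \<in> localize m UNIV" unfolding localize_def using pm1 One_fract_def by blast
  show "\<And>x y. x \<in> localize m UNIV \<Longrightarrow> y \<in> localize m UNIV \<Longrightarrow> x + y \<in> localize m UNIV"
    by (rule loc_add[OF ideal_UNIV])
  show "\<And>x y. x \<in> localize m UNIV \<Longrightarrow> y \<in> localize m UNIV \<Longrightarrow> x * y \<in> localize m UNIV"
    by (rule loc_mul[OF ideal_UNIV])
  show "\<And>x. x \<in> localize m UNIV \<Longrightarrow> - x \<in> localize m UNIV" by (rule loc_neg)
  show "localize m m \<subseteq> localize m UNIV" unfolding localize_def by blast
  show "0 \<in> localize m m" by (rule loc_0[OF pm_ideal])
  show "\<And>x y. x \<in> localize m m \<Longrightarrow> y \<in> localize m m \<Longrightarrow> x + y \<in> localize m m"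
    by (rule loc_add[OF pm_ideal])
  show "\<And>r x. r \<in> localize m UNIV \<Longrightarrow> x \<in> localize m m \<Longrightarrow> r * x \<in> localize m m"
    by (rule loc_mul[OF pm_ideal])
  show "1 \<notin> localize m m"
  proof
    assume "1 \<in> localize m m"
    then obtain a s where h: "a \<in> m" "s \<notin> m" "1 = Fract a s" unfolding localize_def by blast
    then have "Fract 1 1 = Fract a s" by (simp add: One_fract_def)
    then have "s = a" using pnz[OF h(2)] by (simp add: eq_fract)
    then show False using h by simp
  qed
  show "\<And>x. x \<in> localize m UNIV \<Longrightarrow> x \<notin> localize m m \<Longrightarrow> inverse x \<in> localize m UNIV"
  proof -
    fix x assume x: "x \<in> localize m UNIV" "x \<notin> localize m m"
    then obtain a s where h: "s \<notin> m" "x = Fract a s" unfolding localize_def by blast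
    then have "a \<notin> m" using x(2) unfolding localize_def by blast
    then show "inverse x \<in> localize m UNIV" using h unfolding localize_def by auto
  qed
qed

end


context
  fixes m :: "'a::idom set"
  assumes pm: "primeI m"
begin

interpretation L: loc "localize m UNIV" "localize m m" by (rule loc_interp[OF pm])

lemma loc_subm: assumes S: "is_ideal S"
  shows "L.subm (localize m S)"
  unfolding L.subm_def
proof (intro conjI ballI)
  show "0 \<in> localize m S" by (rule loc_0[OF pm S])
  show "\<And>u v. u \<in> localize m S \<Longrightarrow> v \<in> localize m S \<Longrightarrow> u + v \<in> localize m S"
    by (rule loc_add[OF pm S])
  show "\<And>r u. r \<in> localize m UNIV \<Longrightarrow> u \<in> localize m S \<Longrightarrow> r * u \<in> localize m S"
    by (rule loc_mul[OF pm S])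
qed

lemma loc_sum: assumes s: "s \<notin> m"
    and SS: "L.subm T"
    and P: "\<And>i j. i \<in> localize m I \<Longrightarrow> j \<in> localize m J \<Longrightarrow> i * j \<in> T"
  shows "(\<forall>k<(N::nat). f k \<in> I \<and> g k \<in> J) \<longrightarrow> Fract (\<Sum>k<N. f k * g k) s \<in> T"
proof (induction N)
  case 0
  have "Fract 0 s = 0" by (simp add: fract_collapse)
  then show ?case using L.submD(1)[OF SS] by simp
next
  case (Suc N)
  show ?case
  proof
    assume h: "\<forall>k<Suc N. f k \<in> I \<and> g k \<in> J"
    have s0: "s \<noteq> 0" using pnz[OF pm s] .
    have e: "Fract (\<Sum>k<Suc N. f k * g k) s = Fract (\<Sum>k<N. f k * g k) s + Fract (f N) s * Fract (g N) 1"
      using Fract_add_same[OF pm s0] by simp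
    have xT: "Fract (\<Sum>k<N. f k * g k) s \<in> T" using Suc h by simp
    have fI: "Fract (f N) s \<in> localize m I" using h s unfolding localize_def by blast
    have gJ: "Fract (g N) 1 \<in> localize m J" using h pm1[OF pm] unfolding localize_def by blast
    show "Fract (\<Sum>k<Suc N. f k * g k) s \<in> T" unfolding e
      by (rule L.submD(2)[OF SS xT P[OF fI gJ]])
  qed
qed

end

theorem lemma4p9:
  fixes I J m :: "'a::idom set"
  assumes "is_ideal I" and "is_ideal J"
    and "I \<noteq> {0}" and "J \<noteq> {0}"
    and "generated_by_3 (ideal_prod I J)"
    and "maximal_ideal m"
  defines "Rm \<equiv> localize m UNIV"
    and "Im \<equiv> localize m I"
    and "Jm \<equiv> localize m J"
    and "IJm \<equiv> localize m (ideal_prod I J)"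
  shows
    "((\<exists>x\<in>Im. x \<noteq> 0 \<and> (\<exists>i\<in>Im. \<exists>j\<in>Jm.
         IJm = {r * (i * j) + x * z | r z. r \<in> Rm \<and> z \<in> Jm}))
      \<or> (\<exists>y\<in>Jm. y \<noteq> 0 \<and> (\<exists>i\<in>Im. \<exists>j\<in>Jm.
         IJm = {r * (i * j) + y * z | r z. r \<in> Rm \<and> z \<in> Im})))
     \<and> (\<forall>x\<in>Im. \<forall>i\<in>Im. \<forall>j\<in>Jm. x \<noteq> 0 \<and>
          IJm = {r * (i * j) + x * z | r z. r \<in> Rm \<and> z \<in> Jm} \<longrightarrow>
          (\<forall>w\<in>IJm. \<exists>i'\<in>Im. \<exists>z\<in>Jm. w - i' * j = x * z))
     \<and> (\<forall>y\<in>Jm. \<forall>i\<in>Im. \<forall>j\<in>Jm. y \<noteq> 0 \<and>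
          IJm = {r * (i * j) + y * z | r z. r \<in> Rm \<and> z \<in> Im} \<longrightarrow>
          (\<forall>w\<in>IJm. \<exists>j'\<in>Jm. \<exists>z\<in>Im. w - i * j' = y * z))"
proof -
  have pm: "primeI m" using maximal_prime assms(6) by blast
  interpret L: loc "localize m UNIV" "localize m m" by (rule loc_interp[OF pm])
  have IS: "L.subm Im" unfolding Im_def by (rule loc_subm[OF pm assms(1)])
  have JS: "L.subm Jm" unfolding Jm_def by (rule loc_subm[OF pm assms(2)])
  obtain a b c where G: "ideal_prod I J = {r * a + s * b + t * c | r s t. True}"
    using assms(5) unfolding generated_by_3_def by blast
  have idG: "is_ideal (ideal_prod I J)" unfolding G is_ideal_def
  proof (intro conjI ballI allI)
    show "0 \<in> {r * a + s * b + t * c | r s t. True}"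
      by (intro CollectI exI[of _ 0]) simp
  next
    fix u v assume "u \<in> {r * a + s * b + t * c | r s t. True}" "v \<in> {r * a + s * b + t * c | r s t. True}"
    then obtain r1 s1 t1 r2 s2 t2 where "u = r1 * a + s1 * b + t1 * c" "v = r2 * a + s2 * b + t2 * c" by blast
    then show "u + v \<in> {r * a + s * b + t * c | r s t. True}"
      by (intro CollectI exI[of _ "r1 + r2"] exI[of _ "s1 + s2"] exI[of _ "t1 + t2"]) (simp add: algebra_simps)
  next
    fix q u assume "u \<in> {r * a + s * b + t * c | r s t. True}"
    then obtain r1 s1 t1 where "u = r1 * a + s1 * b + t1 * c" by blast
    then show "q * u \<in> {r * a + s * b + t * c | r s t. True}"
      by (intro CollectI exI[of _ "q * r1"] exI[of _ "q * s1"] exI[of _ "q * t1"]) (simp add: algebra_simps)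
  qed
  have KS: "L.subm IJm" unfolding IJm_def by (rule loc_subm[OF pm idG])
  have m1: "1 \<notin> m" by (rule pm1[OF pm])
  have KE: "IJm = L.sp3 (localize m UNIV) (Fract a 1) (Fract b 1) (Fract c 1)"
  proof
    show "IJm \<subseteq> L.sp3 (localize m UNIV) (Fract a 1) (Fract b 1) (Fract c 1)"
    proof
      fix w assume "w \<in> IJm"
      then obtain q s where qs: "q \<in> ideal_prod I J" "s \<notin> m" "w = Fract q s"
        unfolding IJm_def localize_def by blast
      obtain r1 s1 t1 where q: "q = r1 * a + s1 * b + t1 * c" using qs(1) unfolding G by blast
      have s0: "s \<noteq> 0" using pnz[OF pm qs(2)] .
      have we: "w = Fract r1 s * Fract a 1 + Fract s1 s * Fract b 1 + Fract t1 s * Fract c 1"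
        unfolding qs(3) q using Fract_add_same[OF pm s0] by simp
      have mem: "Fract r1 s \<in> localize m UNIV" "Fract s1 s \<in> localize m UNIV" "Fract t1 s \<in> localize m UNIV"
        unfolding localize_def using qs(2) by blast+
      show "w \<in> L.sp3 (localize m UNIV) (Fract a 1) (Fract b 1) (Fract c 1)" unfolding we
        by (rule L.sp3I[OF mem])
    qed
    have "a \<in> ideal_prod I J" unfolding G by (intro CollectI exI[of _ 1] exI[of _ 0]) simp
    moreover have "b \<in> ideal_prod I J" unfolding G by (intro CollectI exI[of _ 0] exI[of _ 1]) simp
    moreover have "c \<in> ideal_prod I J" unfolding G
      by (intro CollectI exI[of _ 0] exI[of _ 0] exI[of _ 1]) simp
    ultimately have ga: "Fract a 1 \<in> IJm" "Fract b 1 \<in> IJm" "Fract c 1 \<in> IJm"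
      unfolding IJm_def localize_def using m1 by blast+
    show "L.sp3 (localize m UNIV) (Fract a 1) (Fract b 1) (Fract c 1) \<subseteq> IJm"
    proof
      fix w assume "w \<in> L.sp3 (localize m UNIV) (Fract a 1) (Fract b 1) (Fract c 1)"
      then obtain r1 r2 r3 where rr: "r1 \<in> localize m UNIV" "r2 \<in> localize m UNIV" "r3 \<in> localize m UNIV"
        and we: "w = r1 * Fract a 1 + r2 * Fract b 1 + r3 * Fract c 1" by (elim L.sp3E)
      show "w \<in> IJm" unfolding we by (intro L.submD(2)[OF KS] L.submD(3)[OF KS] ga rr)
    qed
  qed
  have prod: "i * j \<in> IJm" if ij: "i \<in> Im" "j \<in> Jm" for i j
  proof -
    obtain a1 s b1 t where h: "a1 \<in> I" "s \<notin> m" "i = Fract a1 s" "b1 \<in> J" "t \<notin> m" "j = Fract b1 t"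
      using ij unfolding Im_def Jm_def localize_def by blast
    have "a1 * b1 \<in> ideal_prod I J" unfolding ideal_prod_def
      using h by (intro CollectI exI[of _ 1] exI[of _ "\<lambda>_. a1"] exI[of _ "\<lambda>_. b1"]) simp
    moreover have "s * t \<notin> m" using pmul[OF pm] h by blast
    ultimately show ?thesis unfolding IJm_def localize_def h by auto
  qed
  have gen: "IJm \<subseteq> T" if T: "L.subm T" and P: "\<forall>i\<in>Im. \<forall>j\<in>Jm. i * j \<in> T" for T
  proof
    fix w assume "w \<in> IJm"
    then obtain q s where qs: "q \<in> ideal_prod I J" "s \<notin> m" "w = Fract q s"
      unfolding IJm_def localize_def by blast
    then obtain N f g where "q = (\<Sum>k<(N::nat). f k * g k)" "\<forall>k<N. f k \<in> I \<and> g k \<in> J"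
      unfolding ideal_prod_def by blast
    then show "w \<in> T" using loc_sum[OF pm qs(2) T, of I J N f g] P qs(3)
      unfolding Im_def Jm_def by blast
  qed
  have st: "L.setting Im Jm (Fract a 1) (Fract b 1) (Fract c 1)"
    unfolding L.setting_def KE[symmetric] using IS JS prod gen by blast
  obtain i0 where i0: "i0 \<in> I" "i0 \<noteq> 0" using assms(3) idealD(1)[OF assms(1)] by blast
  have x0: "Fract i0 1 \<in> Im" "Fract i0 1 \<noteq> 0"
    using i0 m1 unfolding Im_def localize_def by (auto simp: Zero_fract_def eq_fract)
  have c1: "(\<exists>x\<in>Im. x \<noteq> 0 \<and> (\<exists>i\<in>Im. \<exists>j\<in>Jm.
         IJm = {r * (i * j) + x * z | r z. r \<in> localize m UNIV \<and> z \<in> Jm}))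
      \<or> (\<exists>y\<in>Jm. y \<noteq> 0 \<and> (\<exists>i\<in>Im. \<exists>j\<in>Jm.
         IJm = {r * (i * j) + y * z | r z. r \<in> localize m UNIV \<and> z \<in> Im}))"
    using L.core[OF st x0] unfolding KE[symmetric] .
  have c2: "\<forall>x\<in>Im. \<forall>i\<in>Im. \<forall>j\<in>Jm. x \<noteq> 0 \<and>
          IJm = {r * (i * j) + x * z | r z. r \<in> localize m UNIV \<and> z \<in> Jm} \<longrightarrow>
          (\<forall>w\<in>IJm. \<exists>i'\<in>Im. \<exists>z\<in>Jm. w - i' * j = x * z)"
  proof (intro ballI impI)
    fix x i j w assume h: "x \<in> Im" "i \<in> Im" "j \<in> Jm"
      "x \<noteq> 0 \<and> IJm = {r * (i * j) + x * z | r z. r \<in> localize m UNIV \<and> z \<in> Jm}" "w \<in> IJm"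
    then obtain r z where rz: "r \<in> localize m UNIV" "z \<in> Jm" "w = r * (i * j) + x * z" by blast
    have "r * i \<in> Im" using L.submD(3)[OF IS rz(1) h(2)] .
    moreover have "w - (r * i) * j = x * z" using rz(3) by (simp add: algebra_simps)
    ultimately show "\<exists>i'\<in>Im. \<exists>z\<in>Jm. w - i' * j = x * z" using rz(2) by blast
  qed
  have c3: "\<forall>y\<in>Jm. \<forall>i\<in>Im. \<forall>j\<in>Jm. y \<noteq> 0 \<and>
          IJm = {r * (i * j) + y * z | r z. r \<in> localize m UNIV \<and> z \<in> Im} \<longrightarrow>
          (\<forall>w\<in>IJm. \<exists>j'\<in>Jm. \<exists>z\<in>Im. w - i * j' = y * z)"
  proof (intro ballI impI)
    fix y i j w assume h: "y \<in> Jm" "i \<in> Im" "j \<in> Jm"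
      "y \<noteq> 0 \<and> IJm = {r * (i * j) + y * z | r z. r \<in> localize m UNIV \<and> z \<in> Im}" "w \<in> IJm"
    then obtain r z where rz: "r \<in> localize m UNIV" "z \<in> Im" "w = r * (i * j) + y * z" by blast
    have "r * j \<in> Jm" using L.submD(3)[OF JS rz(1) h(3)] .
    moreover have "w - i * (r * j) = y * z" using rz(3) by (simp add: algebra_simps)
    ultimately show "\<exists>j'\<in>Jm. \<exists>z\<in>Im. w - i * j' = y * z" using rz(2) by blast
  qed
  show ?thesis using c1 c2 c3 unfolding Rm_def by blast
qed

end
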